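(* Let $M(x,y)=M(q,\nu,t,w,1;x,y)$ and define the kernel $$K(x,y)=1-\frac{x^2ywt(\nu-1)}{x-1}-\frac{xy^2t}{y-1}-xyt(x\nu-1)M(x,1)-xywt\big((\nu-1)(y-1)+qy\big)M(1,y).$$ Set $x=1+ts$, where $s$ is a new indeterminate. Then there are exactly two series $Y$ in $\mathbb{Q}(q,\nu,w,s)[[t]]$ satisfying $K(1+ts,Y)=0$; denote them $Y_1,Y_2$. Their constant terms are $1$ and $\frac{s}{w(\nu-1)}$ respectively, and the coefficient of $t$ in $Y_1$ is $\frac{s}{w-w\nu+s}$ (in particular it is non-zero).
   Context: A planar map is a proper embedding of a connected planar graph (loops and multiple edges allowed) in the oriented sphere, up to orientation-preserving homeomorphism; it is rooted by distinguishing a corner (sector between consecutive edges around a vertex), whose vertex and face are the root-vertex and root-face; degrees are counted with multiplicity; the atomic map (one vertex, no edge) is included. $e(M),v(M),f(M)$ are numbers of edges, vertices, faces; $d_v(M),d_f(M)$ the degrees of root-vertex and root-face. The Potts polynomial of a graph $G$ is $P_G(q,\nu)=\sum_{c:V(G)\to\{1,\dots,q\}}\nu^{m(c)}$, $m(c)$ = number of monochromatic edges (loops always monochromatic), regarded as a polynomial in $q,\nu$ (divisible by $q$). $M(q,\nu,t,w,z;x,y)=\frac1q\sum_{M}t^{e(M)}w^{v(M)-1}z^{f(M)-1}x^{d_v(M)}y^{d_f(M)}P_M(q,\nu)$ summed over rooted planar maps, a series in $t$ with coefficients in $\mathbb{Q}[q,\nu,w,z,x,y]$. *)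

theory Defs
  imports "HOL-Computational_Algebra.Computational_Algebra"
          "HOL-Computational_Algebra.Fraction_Field"
          "HOL-Combinatorics.Permutations"
          "HOL-Library.FuncSet"
begin

section \<open>The coefficient field Q(q,nu,w,s)\<close>

type_synonym R = "rat poly poly poly poly"
type_synonym F = "R fract"

definition qF :: F where "qF = Fract ([:0,1:] :: R) 1"
definition nuF :: F where "nuF = Fract ([:[:0,1:]:] :: R) 1"
definition wF :: F where "wF = Fract ([:[:[:0,1:]:]:] :: R) 1"
definition sF :: F where "sF = Fract ([:[:[:[:0,1:]:]:]:] :: R) 1"

section \<open>Potts polynomial of a graph (loops and multiple edges allowed)\<close>

definition potts_colsum :: "'v set \<Rightarrow> 'e set \<Rightarrow> ('e \<Rightarrow> 'v set) \<Rightarrow> nat \<Rightarrow> int poly" where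
  "potts_colsum V E ends Q =
     (\<Sum>c\<in>PiE V (\<lambda>_. {1..Q}).
        [:0,1:] ^ card {e\<in>E. \<forall>u\<in>ends e. \<forall>v\<in>ends e. c u = c v})"

definition potts_poly :: "'v set \<Rightarrow> 'e set \<Rightarrow> ('e \<Rightarrow> 'v set) \<Rightarrow> int poly poly" where
  "potts_poly V E ends = (THE p. \<forall>Q\<ge>1. poly p [:int Q:] = potts_colsum V E ends Q)"

definition eval_qnu :: "int poly poly \<Rightarrow> F" where
  "eval_qnu p = poly (map_poly (\<lambda>c. poly (map_poly of_int c) nuF) p) qF"

section \<open>Rooted planar maps as combinatorial maps\<close>

definition orb :: "('a \<Rightarrow> 'a) \<Rightarrow> 'a \<Rightarrow> 'a set" where
  "orb f d = {(f ^^ k) d | k. True}"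

definition darts :: "nat \<Rightarrow> nat set" where "darts n = {..<2*n}"

definition map_verts :: "(nat \<Rightarrow> nat) \<Rightarrow> nat set \<Rightarrow> nat set set" where
  "map_verts \<sigma> D = orb \<sigma> ` D"
definition map_faces :: "(nat \<Rightarrow> nat) \<Rightarrow> (nat \<Rightarrow> nat) \<Rightarrow> nat set \<Rightarrow> nat set set" where
  "map_faces \<sigma> \<alpha> D = orb (\<sigma> \<circ> \<alpha>) ` D"
definition map_edges :: "(nat \<Rightarrow> nat) \<Rightarrow> nat set \<Rightarrow> nat set set" where
  "map_edges \<alpha> D = (\<lambda>d. {d, \<alpha> d}) ` D"

text \<open>Rooted planar maps with n \<ge> 1 edges: vertex rotation sigma, edge involution alpha
  (fixed-point free) on the dart set, connected, of genus 0 (Euler: v - e + f = 2), root dart r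
  (the root corner is the corner between r and sigma r).\<close>
definition rooted_maps :: "nat \<Rightarrow> ((nat \<Rightarrow> nat) \<times> (nat \<Rightarrow> nat) \<times> nat) set" where
  "rooted_maps n = {(\<sigma>, \<alpha>, r). \<sigma> permutes darts n \<and> \<alpha> permutes darts n \<and>
      (\<forall>d\<in>darts n. \<alpha> d \<noteq> d \<and> \<alpha> (\<alpha> d) = d) \<and> r \<in> darts n \<and>
      darts n \<subseteq> {d. (r, d) \<in> ({(a, \<sigma> a) | a. a \<in> darts n} \<union> {(a, \<alpha> a) | a. a \<in> darts n})\<^sup>*} \<and>
      card (map_verts \<sigma> (darts n)) + card (map_faces \<sigma> \<alpha> (darts n)) = n + 2}"

definition map_iso :: "nat \<Rightarrow> (((nat \<Rightarrow> nat) \<times> (nat \<Rightarrow> nat) \<times> nat) \<times> ((nat \<Rightarrow> nat) \<times> (nat \<Rightarrow> nat) \<times> nat)) set" where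
  "map_iso n = {((\<sigma>, \<alpha>, r), (\<sigma>', \<alpha>', r')).
      (\<sigma>, \<alpha>, r) \<in> rooted_maps n \<and> (\<sigma>', \<alpha>', r') \<in> rooted_maps n \<and>
      (\<exists>h. bij_betw h (darts n) (darts n) \<and> h r = r' \<and>
           (\<forall>d\<in>darts n. h (\<sigma> d) = \<sigma>' (h d) \<and> h (\<alpha> d) = \<alpha>' (h d)))}"

definition map_weight :: "F \<Rightarrow> nat \<Rightarrow> (nat \<Rightarrow> nat) \<times> (nat \<Rightarrow> nat) \<times> nat \<Rightarrow> F" where
  "map_weight z n m = (case m of (\<sigma>, \<alpha>, r) \<Rightarrow>
      wF ^ (card (map_verts \<sigma> (darts n)) - 1) * z ^ (card (map_faces \<sigma> \<alpha> (darts n)) - 1) *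
      eval_qnu (potts_poly (map_verts \<sigma> (darts n)) (map_edges \<alpha> (darts n)) (\<lambda>e. orb \<sigma> ` e)) / qF)"

definition root_vdeg :: "(nat \<Rightarrow> nat) \<times> (nat \<Rightarrow> nat) \<times> nat \<Rightarrow> nat" where
  "root_vdeg m = (case m of (\<sigma>, \<alpha>, r) \<Rightarrow> card (orb \<sigma> r))"
definition root_fdeg :: "(nat \<Rightarrow> nat) \<times> (nat \<Rightarrow> nat) \<times> nat \<Rightarrow> nat" where
  "root_fdeg m = (case m of (\<sigma>, \<alpha>, r) \<Rightarrow> card (orb (\<sigma> \<circ> \<alpha>) (\<sigma> r)))"

text \<open>Weight of the atomic map (one vertex, no edge, one face): w^0 z^0 P/q.\<close>
definition atomic_weight :: F where
  "atomic_weight = eval_qnu (potts_poly {()} ({} :: unit set) (\<lambda>_. {})) / qF"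

text \<open>Coefficient of t^n in M(q,nu,t,w,z;x,y), as a polynomial in y (outer) whose
  coefficients are polynomials in x, over F.\<close>
definition Mcoeff :: "F \<Rightarrow> nat \<Rightarrow> F poly poly" where
  "Mcoeff z n = (if n = 0 then [:[:atomic_weight:]:]
     else (\<Sum>C\<in>rooted_maps n // map_iso n.
             (let m = (SOME m. m \<in> C) in monom (monom (map_weight z n m) (root_vdeg m)) (root_fdeg m))))"

definition tsum_series :: "(nat \<Rightarrow> F fps) \<Rightarrow> F fps" where
  "tsum_series f = Abs_fps (\<lambda>n. \<Sum>k\<le>n. f k $ (n - k))"

definition M_x1 :: "F fps \<Rightarrow> F fps" where
  "M_x1 X = tsum_series (\<lambda>k. poly (map_poly fps_const (poly (Mcoeff 1 k) 1)) X)"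
definition M_1y :: "F fps \<Rightarrow> F fps" where
  "M_1y Y = tsum_series (\<lambda>k. poly (map_poly fps_const (map_poly (\<lambda>p. poly p 1) (Mcoeff 1 k))) Y)"

definition kernel :: "F fps \<Rightarrow> F fps \<Rightarrow> F fls" where
  "kernel X Y = (let x = fps_to_fls X; y = fps_to_fls Y; t = fls_X;
       q = fls_const qF; nu = fls_const nuF; w = fls_const wF in
     1 - x^2 * y * w * t * (nu - 1) / (x - 1) - x * y^2 * t / (y - 1)
       - x * y * t * (x * nu - 1) * fps_to_fls (M_x1 X)
       - x * y * w * t * ((nu - 1) * (y - 1) + q * y) * fps_to_fls (M_1y Y))"

end

theory Submission
  imports Defs
begin


lemma Xpow_dvd_iff:
  fixes f :: "'a::field fps"
  shows "fps_X^n dvd f \<longleftrightarrow> (\<forall>k<n. f$k = 0)"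
proof
  assume "fps_X^n dvd f"
  then obtain h where "f = fps_X^n * h" by (auto elim: dvdE)
  then show "\<forall>k<n. f$k = 0" by (simp add: fps_X_power_mult_nth)
next
  assume H: "\<forall>k<n. f$k = 0"
  have "f = fps_X^n * fps_shift n f"
    by (rule fps_ext) (simp add: fps_X_power_mult_nth H)
  then show "fps_X^n dvd f" by (metis dvd_triv_left)
qed

definition cz :: "nat \<Rightarrow> ('a::field fps \<Rightarrow> 'a fps) \<Rightarrow> bool" where
  "cz k \<Phi> \<longleftrightarrow> (\<forall>n f g. fps_X^n dvd (f - g) \<longrightarrow> fps_X^(n+k) dvd (\<Phi> f - \<Phi> g))"

lemma czI: "(\<And>n f g. fps_X^n dvd (f - g) \<Longrightarrow> fps_X^(n+k) dvd (\<Phi> f - \<Phi> g)) \<Longrightarrow> cz k \<Phi>"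
  unfolding cz_def by blast

lemma czD: "cz k \<Phi> \<Longrightarrow> fps_X^n dvd (f - g) \<Longrightarrow> fps_X^(n+k) dvd (\<Phi> f - \<Phi> g)"
  unfolding cz_def by blast

lemma cz_const: "cz k (\<lambda>y. c)" by (rule czI) simp
lemma cz_id: "cz 0 (\<lambda>y. y)" by (rule czI) simp

lemma cz_add: "cz k \<Phi> \<Longrightarrow> cz k \<Psi> \<Longrightarrow> cz k (\<lambda>y. \<Phi> y + \<Psi> y)"
proof (rule czI)
  fix n and f g :: "'a::field fps" assume a: "cz k \<Phi>" "cz k \<Psi>" "fps_X^n dvd (f - g)"
  have 1: "fps_X^(n+k) dvd (\<Phi> f - \<Phi> g)" using a czD by blast
  have 2: "fps_X^(n+k) dvd (\<Psi> f - \<Psi> g)" using a czD by blast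
  have e: "(\<Phi> f + \<Psi> f) - (\<Phi> g + \<Psi> g) = (\<Phi> f - \<Phi> g) + (\<Psi> f - \<Psi> g)"
    by (simp only: add_diff_add)
  show "fps_X^(n+k) dvd ((\<Phi> f + \<Psi> f) - (\<Phi> g + \<Psi> g))"
    unfolding e by (rule dvd_add[OF 1 2])
qed

lemma cz_diff: "cz k \<Phi> \<Longrightarrow> cz k \<Psi> \<Longrightarrow> cz k (\<lambda>y. \<Phi> y - \<Psi> y)"
proof (rule czI)
  fix n and f g :: "'a::field fps" assume a: "cz k \<Phi>" "cz k \<Psi>" "fps_X^n dvd (f - g)"
  have 1: "fps_X^(n+k) dvd (\<Phi> f - \<Phi> g)" using a czD by blast
  have 2: "fps_X^(n+k) dvd (\<Psi> f - \<Psi> g)" using a czD by blast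
  have e: "(\<Phi> f - \<Psi> f) - (\<Phi> g - \<Psi> g) = (\<Phi> f - \<Phi> g) - (\<Psi> f - \<Psi> g)"
    by (simp add: algebra_simps)
  show "fps_X^(n+k) dvd ((\<Phi> f - \<Psi> f) - (\<Phi> g - \<Psi> g))"
    unfolding e by (rule dvd_diff[OF 1 2])
qed

lemma cz_mult: "cz k \<Phi> \<Longrightarrow> cz k \<Psi> \<Longrightarrow> cz k (\<lambda>y. \<Phi> y * \<Psi> y)"
proof (rule czI)
  fix n and f g :: "'a::field fps" assume a: "cz k \<Phi>" "cz k \<Psi>" "fps_X^n dvd (f - g)"
  have 1: "fps_X^(n+k) dvd (\<Phi> f - \<Phi> g)" using a czD by blast
  have 2: "fps_X^(n+k) dvd (\<Psi> f - \<Psi> g)" using a czD by blast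
  have e: "\<Phi> f * \<Psi> f - \<Phi> g * \<Psi> g = \<Phi> f * (\<Psi> f - \<Psi> g) + (\<Phi> f - \<Phi> g) * \<Psi> g"
    by (simp add: algebra_simps)
  show "fps_X^(n+k) dvd (\<Phi> f * \<Psi> f - \<Phi> g * \<Psi> g)"
    unfolding e by (rule dvd_add[OF dvd_mult[OF 2] dvd_mult2[OF 1]])
qed

lemma inv_dvd:
  fixes f g :: "'a::field fps"
  assumes "fps_X^m dvd (f - g)"
  shows "fps_X^m dvd (inverse f - inverse g)"
proof (cases m)
  case 0 then show ?thesis by simp
next
  case (Suc m')
  have "\<forall>k<m. (f - g) $ k = 0" using assms by (subst (asm) Xpow_dvd_iff)
  then have "(f - g) $ 0 = 0" using Suc by blast
  then have e: "f$0 = g$0" by simp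
  show ?thesis
  proof (cases "f$0 = 0")
    case True then show ?thesis using e by (simp add: fps_inverse_eq_0)
  next
    case False
    then have "g$0 \<noteq> 0" using e by simp
    have a: "inverse f * f = 1" using False by (rule inverse_mult_eq_1)
    have b: "inverse g * g = 1" using \<open>g$0 \<noteq> 0\<close> by (rule inverse_mult_eq_1)
    have "inverse f * inverse g * (g - f) = inverse f * (inverse g * g) - inverse g * (inverse f * f)"
      by (simp only: right_diff_distrib mult.assoc mult.left_commute)
    then have eq: "inverse f - inverse g = inverse f * inverse g * (g - f)" by (simp only: a b mult_1_right)
    have "fps_X^m dvd (g - f)" using assms by (metis dvd_minus_iff minus_diff_eq)
    then show ?thesis unfolding eq by (rule dvd_mult)
  qed
qed

lemma cz_inverse: "cz k \<Phi> \<Longrightarrow> cz k (\<lambda>y. inverse (\<Phi> y))"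
  by (rule czI) (rule inv_dvd, erule (1) czD)

lemma cz_X: "cz k \<Phi> \<Longrightarrow> cz (Suc k) (\<lambda>y. fps_X * \<Phi> y)"
proof (rule czI)
  fix n and f g :: "'a::field fps" assume "cz k \<Phi>" "fps_X^n dvd (f - g)"
  then have "fps_X^(n+k) dvd (\<Phi> f - \<Phi> g)" by (rule czD)
  then have h: "fps_X * fps_X^(n+k) dvd fps_X * (\<Phi> f - \<Phi> g)" by (rule mult_dvd_mono[OF dvd_refl])
  have e1: "(fps_X::'a fps)^(n+Suc k) = fps_X * fps_X^(n+k)" by (simp only: add_Suc_right power_Suc)
  show "fps_X^(n + Suc k) dvd (fps_X * \<Phi> f - fps_X * \<Phi> g)"
    unfolding e1 right_diff_distrib[symmetric] by (rule h)
qed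

lemma cz_Suc: "cz (Suc k) \<Phi> \<Longrightarrow> cz k \<Phi>"
proof (rule czI)
  fix n and f g :: "'a::field fps" assume "cz (Suc k) \<Phi>" "fps_X^n dvd (f - g)"
  then have "fps_X^(n+Suc k) dvd (\<Phi> f - \<Phi> g)" by (rule czD)
  moreover have "(fps_X::'a fps)^(n+k) dvd fps_X^(n+Suc k)" by (rule le_imp_power_dvd) simp
  ultimately show "fps_X^(n+k) dvd (\<Phi> f - \<Phi> g)" by (rule dvd_trans[rotated])
qed

lemma cz_comp: fixes \<Psi> \<Phi> :: "'a::field fps \<Rightarrow> 'a fps" shows "cz a \<Psi> \<Longrightarrow> cz b \<Phi> \<Longrightarrow> cz (a+b) (\<lambda>y. \<Phi> (\<Psi> y))"
proof (rule czI)
  fix n and f g :: "'a::field fps" assume "cz a \<Psi>" "cz b \<Phi>" "fps_X^n dvd (f - g)"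
  then have "fps_X^(n+a) dvd (\<Psi> f - \<Psi> g)" by (blast intro: czD)
  then have "fps_X^(n+a+b) dvd (\<Phi> (\<Psi> f) - \<Phi> (\<Psi> g))" using \<open>cz b \<Phi>\<close> by (blast intro: czD)
  then show "fps_X^(n+(a+b)) dvd (\<Phi> (\<Psi> f) - \<Phi> (\<Psi> g))" by (simp only: add.assoc)
qed

lemma cz_poly: fixes p :: "'a::field fps poly" shows "cz 0 \<Phi> \<Longrightarrow> cz 0 (\<lambda>y. poly p (\<Phi> y))"
proof (induction p)
  case 0 then show ?case by (simp only: poly_0 cz_const)
next
  case (pCons a p)
  show ?case unfolding poly_pCons
    by (rule cz_add[OF cz_const cz_mult[OF pCons.prems pCons.IH[OF pCons.prems]]])
qed

lemma cz1_fix_unique: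
  fixes \<Phi> :: "'a::field fps \<Rightarrow> 'a fps"
  assumes c: "cz 1 \<Phi>" and a: "\<Phi> a = a" and b: "\<Phi> b = b"
  shows "a = b"
proof -
  have "fps_X^n dvd (a - b)" for n
  proof (induction n)
    case 0 then show ?case by simp
  next
    case (Suc n)
    then have "fps_X^(n+1) dvd (\<Phi> a - \<Phi> b)" using c by (rule czD[rotated])
    then show ?case using a b by simp
  qed
  then have "(a - b) $ n = 0" for n using Xpow_dvd_iff[of "Suc n" "a-b"] by blast
  then show ?thesis by (simp add: fps_eq_iff)
qed

lemma cz1_fix_exists:
  fixes \<Phi> :: "'a::field fps \<Rightarrow> 'a fps"
  assumes c: "cz 1 \<Phi>"
  shows "\<exists>y. \<Phi> y = y"
proof -
  define it where "it n = (\<Phi>^^n) 0" for n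
  have itS: "it (Suc n) = \<Phi> (it n)" for n by (simp add: it_def)
  have L1: "fps_X^a dvd (it (a+j) - it a)" for a j
  proof (induction a)
    case 0 then show ?case by (simp only: power_0 one_dvd)
  next
    case (Suc a)
    have h: "fps_X^(a+1) dvd (\<Phi> (it (a+j)) - \<Phi> (it a))" using c Suc.IH by (rule czD)
    have e: "it (Suc a + j) = \<Phi> (it (a+j))" by (simp only: add_Suc itS)
    have h2: "fps_X^(Suc a) dvd (\<Phi> (it (a+j)) - \<Phi> (it a))" using h by (simp only: Suc_eq_plus1)
    show ?case unfolding e itS by (rule h2)
  qed
  define Y where "Y = Abs_fps (\<lambda>n. it (Suc n) $ n)"
  have L2: "fps_X^n dvd (Y - it n)" for n
  proof -
    have "(Y - it n) $ k = 0" if "k < n" for k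
    proof -
      have eq: "it n = it (Suc k + (n - Suc k))" using that by simp
      have "fps_X^(Suc k) dvd (it n - it (Suc k))" unfolding eq by (rule L1)
      then have "(it n - it (Suc k)) $ k = 0" by (subst (asm) Xpow_dvd_iff) blast
      moreover have y: "Y $ k = it (Suc k) $ k" unfolding Y_def by (simp only: fps_nth_Abs_fps)
      ultimately show ?thesis unfolding fps_sub_nth right_minus_eq by (simp only:)
    qed
    then show ?thesis by (subst Xpow_dvd_iff) blast
  qed
  have "\<Phi> Y = Y"
  proof (rule fps_ext)
    fix n
    have "fps_X^(n+1) dvd (\<Phi> Y - \<Phi> (it n))" using czD[OF c L2[of n]] .
    then have "fps_X^(n+1) dvd (\<Phi> Y - it (Suc n))" by (simp only: itS)
    then have "\<forall>k<n+1. (\<Phi> Y - it (Suc n)) $ k = 0" by (subst (asm) Xpow_dvd_iff)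
    then have "(\<Phi> Y - it (Suc n)) $ n = 0" by simp
    moreover have y: "Y $ n = it (Suc n) $ n" unfolding Y_def by (simp only: fps_nth_Abs_fps)
    ultimately show "\<Phi> Y $ n = Y $ n" unfolding fps_sub_nth right_minus_eq y by (simp only:)
  qed
  then show ?thesis by blast
qed

lemma cz_tsum: "cz 0 (\<lambda>y. tsum_series (\<lambda>k. poly (p k) y))"
proof (rule czI)
  fix n and f g :: "F fps" assume d: "fps_X^n dvd (f - g)"
  have "(tsum_series (\<lambda>k. poly (p k) f) - tsum_series (\<lambda>k. poly (p k) g)) $ m = 0" if "m < n" for m
  proof -
    have *: "poly (p k) f $ j = poly (p k) g $ j" if "j < n" for k j
    proof -
      have "fps_X^(n+0) dvd (poly (p k) f - poly (p k) g)"
        using cz_poly[OF cz_id, of "p k"] d by (rule czD)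
      then have "(poly (p k) f - poly (p k) g) $ j = 0" using that by (subst (asm) Xpow_dvd_iff) simp
      then show ?thesis by simp
    qed
    have "(tsum_series (\<lambda>k. poly (p k) f) - tsum_series (\<lambda>k. poly (p k) g)) $ m
       = (\<Sum>k\<le>m. poly (p k) f $ (m-k) - poly (p k) g $ (m-k))"
      by (simp add: tsum_series_def sum_subtractf)
    also have "\<dots> = 0" using that by (intro sum.neutral ballI) (simp add: *)
    finally show ?thesis .
  qed
  then show "fps_X^(n+0) dvd (tsum_series (\<lambda>k. poly (p k) f) - tsum_series (\<lambda>k. poly (p k) g))"
    by (simp add: Xpow_dvd_iff)
qed

lemma cz_M1y: "cz 0 M_1y"
  unfolding M_1y_def[abs_def] by (rule cz_tsum)


lemma sF_nz: "sF \<noteq> 0" by (simp add: sF_def Zero_fract_def eq_fract)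
lemma wF_nz: "wF \<noteq> 0" by (simp add: wF_def Zero_fract_def eq_fract)
lemma nuF_n1: "nuF \<noteq> 1" by (simp add: nuF_def One_fract_def eq_fract one_pCons)
lemma key_ne: "wF * (nuF - 1) \<noteq> sF"
  by (simp add: wF_def nuF_def sF_def One_fract_def eq_fract one_pCons)


definition xs :: "F fps" where "xs = 1 + fps_X * fps_const sF"
definition cF :: F where "cF = wF * (nuF - 1) / sF"
definition DD :: "F fps" where "DD = xs^2 * fps_const cF"
definition RR :: "F fps \<Rightarrow> F fps" where
  "RR y = xs * y * (xs * fps_const nuF - 1) * M_x1 xs
     + xs * y * fps_const wF * ((fps_const nuF - 1) * (y - 1) + fps_const qF * y) * M_1y y"
definition EE :: "F fps \<Rightarrow> F fps" where
  "EE y = (y - 1) * (1 - DD * y - fps_X * RR y) - fps_X * xs * y^2"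

lemma fls_const_diff: "fls_const (a - b) = fls_const a - fls_const (b::'a::ab_group_add)"
  by (intro fls_eqI) simp

lemma cF_ne1: "cF \<noteq> 1" using key_ne sF_nz by (auto simp: cF_def field_simps)
lemma cF_nz: "cF \<noteq> 0" using wF_nz nuF_n1 sF_nz by (simp add: cF_def)

lemma xs0: "xs $ 0 = 1" by (simp add: xs_def)
lemma DD0: "DD $ 0 = cF" by (simp add: DD_def xs_def power2_eq_square)

lemma kernel_eq:
  "kernel xs Y = 1 - fps_to_fls DD * fps_to_fls Y - fls_X * fps_to_fls (RR Y)
     - fps_to_fls xs * fps_to_fls Y ^ 2 * fls_X / (fps_to_fls Y - 1)"
proof -
  define x where "x = fps_to_fls xs"
  define y where "y = fps_to_fls Y"
  have x1: "x - 1 = fls_X * fls_const sF" by (simp add: x_def xs_def fls_times_fps_to_fls)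
  have cc: "fls_const cF * fls_const sF = fls_const wF * (fls_const nuF - 1)"
  proof -
    have "cF * sF = wF*(nuF-1)" using sF_nz by (simp add: cF_def)
    then have "fls_const (cF*sF) = fls_const (wF*(nuF-1))" by simp
    moreover have "fls_const cF * fls_const sF = fls_const (cF*sF)" by simp
    moreover have "fls_const (wF*(nuF-1)) = fls_const wF * (fls_const nuF - 1)"
      by (simp only: fls_const_mult_const[symmetric] fls_const_diff fls_const_1)
    ultimately show ?thesis by simp
  qed
  have sne: "fls_const sF \<noteq> 0" using sF_nz by simp
  have xs_ne: "fls_X * fls_const sF \<noteq> 0" using sne by simp
  have e1: "x^2 * y * fls_const wF * fls_X * (fls_const nuF - 1)
      = x^2 * y * fls_X * (fls_const wF * (fls_const nuF - 1))" by (simp only: mult_ac)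
  also have "\<dots> = x^2 * y * fls_X * (fls_const cF * fls_const sF)" by (simp only: cc)
  also have "\<dots> = (fps_to_fls DD * y) * (fls_X * fls_const sF)"
    by (simp add: DD_def fls_times_fps_to_fls fps_to_fls_power x_def mult_ac)
  finally have e2: "x^2 * y * fls_const wF * fls_X * (fls_const nuF - 1) = (fps_to_fls DD * y) * (fls_X * fls_const sF)" .
  have t2: "x^2 * y * fls_const wF * fls_X * (fls_const nuF - 1) / (x - 1) = fps_to_fls DD * y"
    unfolding x1 e2 using xs_ne by simp
  have t3: "fps_to_fls (RR Y) = x * y * (x * fls_const nuF - 1) * fps_to_fls (M_x1 xs)
      + x * y * fls_const wF * ((fls_const nuF - 1) * (y - 1) + fls_const qF * y) * fps_to_fls (M_1y Y)"
    by (simp add: RR_def fls_times_fps_to_fls x_def y_def)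
  have ab: "\<And>A B x y t P M1 w Q M2 :: F fls. 1 - A - B - x*y*t*P*M1 - x*y*w*t*Q*M2
      = 1 - A - t*(x*y*P*M1 + x*y*w*Q*M2) - B"
    by (simp add: algebra_simps)
  have k0: "kernel xs Y = 1 - x^2 * y * fls_const wF * fls_X * (fls_const nuF - 1) / (x - 1)
      - x * y^2 * fls_X / (y - 1)
      - x * y * fls_X * (x * fls_const nuF - 1) * fps_to_fls (M_x1 xs)
      - x * y * fls_const wF * fls_X * ((fls_const nuF - 1) * (y - 1) + fls_const qF * y) * fps_to_fls (M_1y Y)"
    unfolding kernel_def Let_def x_def y_def by (rule refl)
  show ?thesis
    unfolding k0 t2 t3 x_def[symmetric] y_def[symmetric] by (rule ab)
qed

lemma kernel_iff: "kernel xs Y = 0 \<longleftrightarrow> EE Y = 0"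
proof (cases "Y = 1")
  case True
  have k: "kernel xs 1 = fps_to_fls (1 - DD - fps_X * RR 1)"
    by (simp add: kernel_eq fls_times_fps_to_fls)
  have "(1 - DD - fps_X * RR 1) $ 0 \<noteq> 0" using cF_ne1 by (simp add: DD0)
  then have "kernel xs 1 \<noteq> 0" unfolding k by (metis fps_to_fls_eq_0_iff fps_zero_nth)
  moreover have "EE 1 \<noteq> 0"
  proof
    assume "EE 1 = 0"
    then have "(EE 1) $ 1 = 0" by simp
    then show False by (simp add: EE_def xs0)
  qed
  ultimately show ?thesis using True by simp
next
  case False
  then have ne: "fps_to_fls Y - 1 \<noteq> 0" by simp
  have aux: "\<And>a b c :: F fls. c \<noteq> 0 \<Longrightarrow> (a - b / c) * c = a * c - b"
    by (simp add: field_simps)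
  have "kernel xs Y * (fps_to_fls Y - 1) =
     (1 - fps_to_fls DD * fps_to_fls Y - fls_X * fps_to_fls (RR Y)) * (fps_to_fls Y - 1)
      - fps_to_fls xs * fps_to_fls Y ^ 2 * fls_X"
    unfolding kernel_eq by (rule aux[OF ne])
  also have "\<dots> = fps_to_fls (EE Y)"
    by (simp only: EE_def fps_to_fls_minus fls_times_fps_to_fls fps_to_fls_power fps_one_to_fls fps_X_to_fls mult_ac)
  finally have eq: "kernel xs Y * (fps_to_fls Y - 1) = fps_to_fls (EE Y)" .
  have "kernel xs Y = 0 \<longleftrightarrow> kernel xs Y * (fps_to_fls Y - 1) = 0" using ne by simp
  then show ?thesis unfolding eq by simp
qed



lemma cz_power: "cz k \<Phi> \<Longrightarrow> cz k (\<lambda>y. \<Phi> y ^ n)"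
  by (induction n) (simp_all add: cz_const cz_mult)

lemma cz_RR: "cz 0 RR"
proof -
  have "cz 0 (\<lambda>y. xs * y * (xs * fps_const nuF - 1) * M_x1 xs
     + xs * y * fps_const wF * ((fps_const nuF - 1) * (y - 1) + fps_const qF * y) * M_1y y)"
    by (intro cz_add cz_mult cz_diff cz_const cz_id cz_M1y)
  then show ?thesis unfolding RR_def[abs_def] .
qed

definition Phi1 :: "F fps \<Rightarrow> F fps" where
  "Phi1 y = inverse DD * (1 - fps_X * RR y - fps_X * (xs * y^2 * inverse (y - 1)))"

definition Den :: "F fps \<Rightarrow> F fps" where "Den y = 1 - DD * y - fps_X * RR y"

definition Phi2 :: "F fps \<Rightarrow> F fps" where
  "Phi2 u = xs * (1 + fps_X * u)^2 * inverse (Den (1 + fps_X * u))"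

lemma cz_Phi1: "cz 1 Phi1"
proof -
  have h1: "cz 1 (\<lambda>y. fps_X * RR y)" using cz_X[OF cz_RR] by simp
  have "cz 0 (\<lambda>y. xs * y^2 * inverse (y - 1))"
    by (intro cz_mult cz_diff cz_const cz_power cz_id cz_inverse)
  then have h2: "cz 1 (\<lambda>y. fps_X * (xs * y^2 * inverse (y - 1)))" using cz_X by fastforce
  have "cz 1 (\<lambda>y. inverse DD * (1 - fps_X * RR y - fps_X * (xs * y^2 * inverse (y - 1))))"
    by (rule cz_mult[OF cz_const], rule cz_diff[OF cz_diff[OF cz_const h1] h2])
  then show ?thesis unfolding Phi1_def[abs_def] .
qed

lemma cz_Phi2: "cz 1 Phi2"
proof -
  have a: "cz 1 (\<lambda>u. 1 + fps_X * u)" using cz_add[OF cz_const cz_X[OF cz_id]] by simp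
  have h1: "cz 0 (\<lambda>y. fps_X * RR y)" using cz_Suc[OF cz_X[OF cz_RR]] .
  have b: "cz 0 (\<lambda>y. xs * y^2 * inverse (1 - DD * y - fps_X * RR y))"
    by (rule cz_mult[OF cz_mult[OF cz_const cz_power[OF cz_id]] cz_inverse[OF cz_diff[OF cz_diff[OF cz_const cz_mult[OF cz_const cz_id]] h1]]])
  show ?thesis using cz_comp[OF a b] unfolding Phi2_def[abs_def] Den_def by simp
qed

lemma EE0: "EE y $ 0 = (y$0 - 1) * (1 - cF * y$0)"
  by (simp add: EE_def DD0)

lemma Den0: "y $ 0 = 1 \<Longrightarrow> Den y $ 0 = 1 - cF"
  by (simp add: Den_def DD0)

lemma unit_eq:
  fixes a b c v :: "'a::comm_ring_1"
  assumes "a * v = 1"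
  shows "a * b = c \<longleftrightarrow> b = v * c"
proof
  assume h: "a * b = c"
  have "v * c = v * (a * b)" by (simp only: h)
  also have "\<dots> = (a * v) * b" by (simp only: mult_ac)
  finally have "v * c = (a * v) * b" .
  then show "b = v * c" using assms by simp
next
  assume "b = v * c"
  then have "a * b = (a * v) * c" by (simp add: mult_ac)
  then show "a * b = c" using assms by simp
qed

lemma ab1: "(1::'a::comm_ring_1) - a - b = c \<longleftrightarrow> a = 1 - b - c"
  by (auto simp: algebra_simps)

lemma ab2: "((1::'a::comm_ring_1) + t * u - 1) * D - t * x * w = t * (u * D - x * w)"
  by (simp add: algebra_simps)

lemma EE_Phi1:
  assumes "y $ 0 \<noteq> 1"
  shows "EE y = 0 \<longleftrightarrow> Phi1 y = y"
proof -
  have u: "(y - 1) * inverse (y - 1) = 1" using assms by (simp add: inverse_mult_eq_1')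
  have d: "DD * inverse DD = 1" using cF_nz by (simp add: inverse_mult_eq_1' DD0)
  have "EE y = 0 \<longleftrightarrow> (y - 1) * (1 - DD * y - fps_X * RR y) = fps_X * xs * y^2"
    by (simp only: EE_def right_minus_eq)
  also have "\<dots> \<longleftrightarrow> 1 - DD * y - fps_X * RR y = inverse (y - 1) * (fps_X * xs * y^2)"
    by (rule unit_eq[OF u])
  also have "\<dots> \<longleftrightarrow> DD * y = 1 - fps_X * RR y - inverse (y - 1) * (fps_X * xs * y^2)"
    by (rule ab1)
  also have "\<dots> \<longleftrightarrow> y = inverse DD * (1 - fps_X * RR y - inverse (y - 1) * (fps_X * xs * y^2))"
    by (rule unit_eq[OF d])
  also have "inverse (y - 1) * (fps_X * xs * y^2) = fps_X * (xs * y^2 * inverse (y - 1))"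
    by (simp only: mult_ac)
  finally show ?thesis unfolding Phi1_def by (simp only: eq_commute)
qed

lemma EE_Phi2:
  "EE (1 + fps_X * u) = 0 \<longleftrightarrow> Phi2 u = u"
proof -
  let ?y = "1 + fps_X * u"
  have d: "Den ?y * inverse (Den ?y) = 1" using cF_ne1 Den0[of ?y]
    by (simp add: inverse_mult_eq_1')
  have "EE ?y = (?y - 1) * Den ?y - fps_X * xs * ?y^2"
    by (simp only: EE_def Den_def)
  also have "\<dots> = fps_X * (u * Den ?y - xs * ?y^2)" by (rule ab2)
  finally have e: "EE ?y = fps_X * (u * Den ?y - xs * ?y^2)" .
  have "EE ?y = 0 \<longleftrightarrow> u * Den ?y = xs * ?y^2" unfolding e by simp
  also have "\<dots> \<longleftrightarrow> Den ?y * u = xs * ?y^2" by (simp only: mult.commute)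
  also have "\<dots> \<longleftrightarrow> u = inverse (Den ?y) * (xs * ?y^2)" by (rule unit_eq[OF d])
  also have "\<dots> \<longleftrightarrow> Phi2 u = u" unfolding Phi2_def by (simp only: mult_ac eq_commute)
  finally show ?thesis .
qed



lemma Phi1_0: "Phi1 y $ 0 = inverse cF"
  by (simp add: Phi1_def DD0)

lemma Phi2_0: "Phi2 u $ 0 = inverse (1 - cF)"
proof -
  have "(1 + fps_X * u) $ 0 = 1" by simp
  then have "Den (1 + fps_X * u) $ 0 = 1 - cF" by (rule Den0)
  moreover have "((1 + fps_X * u)^2) $ 0 = 1" by (simp add: power2_eq_square)
  ultimately show ?thesis by (simp add: Phi2_def xs0)
qed

lemma shift_decomp:
  fixes y :: "F fps"
  assumes "y $ 0 = 1" shows "y = 1 + fps_X * fps_shift 1 y"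
proof (rule fps_ext)
  fix n
  show "y $ n = (1 + fps_X * fps_shift 1 y) $ n"
  proof (cases n)
    case 0 then show ?thesis using assms by simp
  next
    case (Suc m)
    have "(fps_X * fps_shift 1 y) $ n = fps_shift 1 y $ m" by (subst fps_X_mult_nth) (simp add: Suc)
    then show ?thesis using Suc by simp
  qed
qed

lemma final_arith:
  "inverse (1 - cF) = sF / (wF - wF * nuF + sF)" "sF / (wF - wF * nuF + sF) \<noteq> 0"
  "inverse cF = sF / (wF * (nuF - 1))"
proof -
  have d: "wF - wF * nuF + sF \<noteq> 0" using key_ne by (auto simp: algebra_simps)
  show "inverse (1 - cF) = sF / (wF - wF * nuF + sF)"
    using d sF_nz by (simp add: cF_def field_simps)
  show "sF / (wF - wF * nuF + sF) \<noteq> 0" using d sF_nz by simp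
  show "inverse cF = sF / (wF * (nuF - 1))" by (simp add: cF_def)
qed

theorem lemma6p1:
  shows "\<exists>Y1 Y2 :: F fps. Y1 \<noteq> Y2 \<and>
     {Y. kernel (1 + fps_X * fps_const sF) Y = 0} = {Y1, Y2} \<and>
     Y1 $ 0 = 1 \<and> Y2 $ 0 = sF / (wF * (nuF - 1)) \<and>
     Y1 $ 1 = sF / (wF - wF * nuF + sF) \<and> Y1 $ 1 \<noteq> 0"
proof -
  obtain u1 where u1: "Phi2 u1 = u1" using cz1_fix_exists[OF cz_Phi2] by blast
  obtain Y2 where Y2: "Phi1 Y2 = Y2" using cz1_fix_exists[OF cz_Phi1] by blast
  define Y1 where "Y1 = 1 + fps_X * u1"
  have Y10: "Y1 $ 0 = 1" by (simp add: Y1_def)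
  have Y11: "Y1 $ 1 = inverse (1 - cF)"
  proof -
    have "Y1 $ 1 = u1 $ 0" by (simp add: Y1_def)
    also have "\<dots> = Phi2 u1 $ 0" by (simp only: u1)
    finally show ?thesis by (simp only: Phi2_0)
  qed
  have Y20: "Y2 $ 0 = inverse cF" by (metis Y2 Phi1_0)
  have Y20n: "Y2 $ 0 \<noteq> 1" unfolding Y20 using cF_ne1 by (metis inverse_1 inverse_inverse_eq)
  have ne: "Y1 \<noteq> Y2" using Y10 Y20n by auto
  have EY1: "EE Y1 = 0" unfolding Y1_def using EE_Phi2 u1 by blast
  have EY2: "EE Y2 = 0" using EE_Phi1[OF Y20n] Y2 by blast
  have set: "{Y. kernel xs Y = 0} = {Y1, Y2}"
  proof (rule set_eqI)
    fix Y
    show "Y \<in> {Y. kernel xs Y = 0} \<longleftrightarrow> Y \<in> {Y1, Y2}"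
    proof
      assume "Y \<in> {Y. kernel xs Y = 0}"
      then have E: "EE Y = 0" using kernel_iff by blast
      show "Y \<in> {Y1, Y2}"
      proof (cases "Y $ 0 = 1")
        case True
        define u where "u = fps_shift 1 Y"
        have Yu: "Y = 1 + fps_X * u" unfolding u_def by (rule shift_decomp[OF True])
        have "Phi2 u = u" using E unfolding Yu using EE_Phi2 by blast
        then have "u = u1" using cz1_fix_unique[OF cz_Phi2 _ u1] by blast
        then show ?thesis unfolding Yu Y1_def by blast
      next
        case False
        have "Phi1 Y = Y" using EE_Phi1[OF False] E by blast
        then have "Y = Y2" using cz1_fix_unique[OF cz_Phi1 _ Y2] by blast
        then show ?thesis by blast
      qed
    next
      assume "Y \<in> {Y1, Y2}"
      then have "EE Y = 0" using EY1 EY2 by blast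
      then show "Y \<in> {Y. kernel xs Y = 0}" using kernel_iff by blast
    qed
  qed
  show ?thesis
    apply (rule exI[of _ Y1], rule exI[of _ Y2])
    using ne set Y10 Y11 Y20 final_arith unfolding xs_def by simp
qed

end
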